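(* Let $m\ge0$, let $f:\mathbb{R}^n\to\mathbb{R}$ be $m$-weakly convex, let $\rho>0$, $\alpha=m+\rho$, $\beta\in(0,1)$, and $x_k\in\mathbb{R}^n$. Let $\tilde f:\mathbb{R}^n\to\mathbb{R}$ be convex with $\tilde f(x)\le f(x)+\frac m2\|x-x_k\|^2$ for all $x$, let $z_{k+1}=\arg\min_x\{\tilde f(x)+\frac{\rho}{2}\|x-x_k\|^2\}$, $\tilde g_{k+1}:=\alpha(x_k-z_{k+1})$ and $\epsilon_{k+1}:=f(z_{k+1})+\frac m2\|z_{k+1}-x_k\|^2-\tilde f(z_{k+1})$. Suppose $$f(x_k)-\Big(f(z_{k+1})+\frac m2\|z_{k+1}-x_k\|^2\Big)\ge\beta\big(f(x_k)-\tilde f(z_{k+1})\big).$$ Then $\tilde g_{k+1}\in\partial_{\epsilon_{k+1}}f(z_{k+1})$ and $$f(z_{k+1})\le f(x_k)-\frac{m+\beta\rho}{\alpha}\cdot\frac{1}{2\alpha}\|\tilde g_{k+1}\|^2,\qquad \epsilon_{k+1}\le\frac{1-\beta}{\beta}\Big(f(x_k)-f(z_{k+1})-\frac{m}{2\alpha^2}\|\tilde g_{k+1}\|^2\Big).$$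
   Context: A function $f$ is $m$-weakly convex ($m\ge 0$) if $x\mapsto f(x)+\frac{m}{2}\|x\|^2$ is convex. For $\epsilon\ge 0$, the $\epsilon$-inexact subdifferential at $x$ is $\partial_\epsilon f(x)=\{v\in\mathbb{R}^n: f(y)\ge f(x)+\langle v,y-x\rangle-\frac{m}{2}\|y-x\|^2-\epsilon\ \ \forall y\in\mathbb{R}^n\}$. *)

theory Defs
  imports "HOL-Analysis.Analysis"
begin

definition weakly_convex :: "real \<Rightarrow> ('a::real_inner \<Rightarrow> real) \<Rightarrow> bool" where
  "weakly_convex m f \<longleftrightarrow> convex_on UNIV (\<lambda>x. f x + m / 2 * norm x ^ 2)"

definition inexact_subdiff ::
  "real \<Rightarrow> ('a::real_inner \<Rightarrow> real) \<Rightarrow> real \<Rightarrow> 'a \<Rightarrow> 'a set" where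
  "inexact_subdiff m f \<epsilon> x =
     {v. \<forall>y. f y \<ge> f x + inner v (y - x) - m / 2 * norm (y - x) ^ 2 - \<epsilon>}"

end

theory Submission
  imports Defs
begin

lemma norm_sq_add_inner:
  fixes a b :: "'a::real_inner"
  shows "norm (a + b) ^ 2 = norm a ^ 2 + 2 * inner a b + norm b ^ 2"
  by (simp add: power2_norm_eq_inner inner_add_left inner_add_right inner_commute)

lemma subgrad_prox:
  fixes ft :: "'a::real_inner \<Rightarrow> real"
  assumes cv: "convex_on UNIV ft" and rho: "\<rho> > 0"
    and mn: "\<forall>x. ft z + \<rho>/2 * norm (z - xk) ^ 2 \<le> ft x + \<rho>/2 * norm (x - xk) ^ 2"
  shows "ft y \<ge> ft z + \<rho> * inner (xk - z) (y - z)"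
proof (rule ccontr)
  assume nt: "\<not> ft y \<ge> ft z + \<rho> * inner (xk - z) (y - z)"
  define J where "J = inner (xk - z) (y - z)"
  define c where "c = ft z + \<rho> * J - ft y"
  have c: "c > 0" using nt c_def J_def by simp
  have "y \<noteq> z" using c c_def J_def by auto
  define n2 where "n2 = norm (y - z) ^ 2"
  have n2: "n2 > 0" using \<open>y \<noteq> z\<close> n2_def by simp
  define t where "t = min (1/2) (c / (\<rho> * n2))"
  have t0: "t > 0" using c n2 rho t_def by simp
  have t1: "t < 1" using t_def by simp
  have tc: "\<rho> * t * n2 \<le> c"
  proof -
    have "t \<le> c / (\<rho> * n2)" using t_def by simp
    then have "t * (\<rho> * n2) \<le> c" using rho n2 by (simp add: pos_le_divide_eq)
    then show ?thesis by (simp add: algebra_simps)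
  qed
  define yt where "yt = (1 - t) *\<^sub>R z + t *\<^sub>R y"
  have cvx: "ft yt \<le> (1 - t) * ft z + t * ft y"
    using convex_onD[OF cv, of t z y] t0 t1 yt_def by simp
  have ey: "yt - xk = (z - xk) + t *\<^sub>R (y - z)" using yt_def by (simp add: algebra_simps)
  have nrm: "norm (yt - xk) ^ 2 = norm (z - xk) ^ 2 + 2 * t * inner (z - xk) (y - z) + t^2 * n2"
    unfolding ey using norm_sq_add_inner[of "z - xk" "t *\<^sub>R (y - z)"] n2_def
    by (simp add: power_mult_distrib)
  have "ft z + \<rho>/2 * norm (z - xk) ^ 2 \<le> ft yt + \<rho>/2 * norm (yt - xk) ^ 2" using mn by blast
  moreover have "inner (z - xk) (y - z) = - J"
    unfolding J_def by (metis inner_minus_left minus_diff_eq)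
  ultimately have "ft z + \<rho>/2 * norm (z - xk) ^ 2 \<le> (1 - t) * ft z + t * ft y + \<rho>/2 * (norm (z - xk) ^ 2 + 2 * t * (-J) + t^2 * n2)"
    using cvx nrm by simp
  then have "0 \<le> t * (ft y - ft z) - \<rho> * t * J + \<rho>/2 * t^2 * n2"
    by (simp add: algebra_simps)
  moreover have "t * (- c + \<rho> * t * n2 / 2) = t * (ft y - ft z) - \<rho> * t * J + \<rho>/2 * t^2 * n2"
    unfolding c_def by (simp add: algebra_simps power2_eq_square)
  ultimately have "0 \<le> t * (- c + \<rho> * t * n2 / 2)" by simp
  then have "0 \<le> - c + \<rho> * t * n2 / 2" using t0 by (simp add: zero_le_mult_iff)
  then show False using tc c by linarith
qed

theorem mainTheorem5:
  fixes f ft :: "real ^ 'n \<Rightarrow> real"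
    and m \<rho> \<alpha> \<beta> :: real
    and xk z g :: "real ^ 'n"
    and \<epsilon> :: real
  assumes m: "m \<ge> 0"
    and wc: "weakly_convex m f"
    and rho: "\<rho> > 0"
    and alpha: "\<alpha> = m + \<rho>"
    and beta: "0 < \<beta>" "\<beta> < 1"
    and ft_convex: "convex_on UNIV ft"
    and ft_le: "\<forall>x. ft x \<le> f x + m / 2 * norm (x - xk) ^ 2"
    and z_def: "is_arg_min (\<lambda>x. ft x + \<rho> / 2 * norm (x - xk) ^ 2) (\<lambda>_. True) z"
    and g_def: "g = \<alpha> *\<^sub>R (xk - z)"
    and eps_def: "\<epsilon> = f z + m / 2 * norm (z - xk) ^ 2 - ft z"
    and descent: "f xk - (f z + m / 2 * norm (z - xk) ^ 2) \<ge> \<beta> * (f xk - ft z)"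
  shows "g \<in> inexact_subdiff m f \<epsilon> z
    \<and> f z \<le> f xk - (m + \<beta> * \<rho>) / \<alpha> * (1 / (2 * \<alpha>)) * norm g ^ 2
    \<and> \<epsilon> \<le> (1 - \<beta>) / \<beta> * (f xk - f z - m / (2 * \<alpha> ^ 2) * norm g ^ 2)"
proof -
  have mn: "\<forall>x. ft z + \<rho>/2 * norm (z - xk) ^ 2 \<le> ft x + \<rho>/2 * norm (x - xk) ^ 2"
    using z_def unfolding is_arg_min_def by (auto simp: not_less)
  note sg = subgrad_prox[OF ft_convex rho mn]
  have apos: "\<alpha> > 0" using alpha m rho by simp
  define d2 where "d2 = norm (z - xk) ^ 2"
  have d2: "d2 \<ge> 0" using d2_def by simp
  have ng: "norm g ^ 2 = \<alpha>^2 * d2"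
    using g_def d2_def apos by (simp add: power_mult_distrib norm_minus_commute)
  have part1: "g \<in> inexact_subdiff m f \<epsilon> z"
    unfolding inexact_subdiff_def
  proof (intro CollectI allI)
    fix y
    have a: "ft y \<ge> ft z + \<rho> * inner (xk - z) (y - z)" using sg .
    have b: "ft y \<le> f y + m / 2 * norm (y - xk) ^ 2" using ft_le by blast
    have "y - xk = (y - z) + (z - xk)" by simp
    then have c: "norm (y - xk) ^ 2 = norm (y - z) ^ 2 + 2 * inner (y - z) (z - xk) + d2"
      using norm_sq_add_inner[of "y - z" "z - xk"] d2_def by simp
    have i1: "inner (y - z) (z - xk) = - inner (xk - z) (y - z)"
      by (metis inner_commute inner_minus_left minus_diff_eq)
    have i2: "inner g (y - z) = \<alpha> * inner (xk - z) (y - z)" using g_def by simp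
    define I where "I = inner (xk - z) (y - z)"
    have c': "norm (y - xk) ^ 2 = norm (y - z) ^ 2 - 2 * I + d2"
      using c i1 unfolding I_def[symmetric] by simp
    have c2: "m / 2 * norm (y - xk) ^ 2 = m / 2 * norm (y - z) ^ 2 - m * I + m / 2 * d2"
      by (simp only: c') (simp add: algebra_simps)
    have i3: "inner g (y - z) = m * I + \<rho> * I" using i2 unfolding I_def[symmetric] alpha by (simp add: distrib_right)
    show "f z + inner g (y - z) - m / 2 * norm (y - z) ^ 2 - \<epsilon> \<le> f y"
    proof -
      have a': "ft z + \<rho> * I \<le> ft y" using a I_def by simp
      have c3: "m / 2 * norm (y - xk) ^ 2 = m / 2 * norm (y - z) ^ 2 - m * I + m / 2 * norm (z - xk) ^ 2"
        using c2 d2_def by simp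
      show ?thesis using a' b c3 i3 eps_def by linarith
    qed
  qed
  have k: "ft xk \<ge> ft z + \<rho> * d2"
    using subgrad_prox[OF ft_convex rho mn, of xk] d2_def
    by (simp add: power2_norm_eq_inner norm_minus_commute inner_commute)
  have fx: "ft xk \<le> f xk" using ft_le by (metis add.right_neutral diff_self norm_zero power_zero_numeral mult_zero_right)
  have B: "f xk - ft z \<ge> \<rho> * d2" using k fx by linarith
  have "\<beta> * (f xk - ft z) \<ge> \<beta> * (\<rho> * d2)" using B beta by simp
  then have "\<beta> * f xk - \<beta> * ft z \<ge> \<beta> * (\<rho> * d2)" by (simp add: right_diff_distrib)
  moreover have bp: "\<beta> * (\<rho> * d2) \<ge> 0" using beta rho d2 by simp
  moreover have de: "f xk - (f z + m / 2 * d2) \<ge> \<beta> * f xk - \<beta> * ft z"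
    using descent d2_def by (simp add: right_diff_distrib)
  moreover have "(m + \<beta> * \<rho>) / 2 * d2 = m / 2 * d2 + \<beta> * (\<rho> * d2) / 2"
    by (simp add: algebra_simps)
  ultimately have p2': "f z \<le> f xk - (m + \<beta> * \<rho>) / 2 * d2"
    by linarith
  have eq2: "(m + \<beta> * \<rho>) / \<alpha> * (1 / (2 * \<alpha>)) * norm g ^ 2 = (m + \<beta> * \<rho>) / 2 * d2"
    using ng apos by (simp add: field_simps power2_eq_square)
  have eq3: "m / (2 * \<alpha> ^ 2) * norm g ^ 2 = m / 2 * d2"
    using ng apos by (simp add: field_simps)
  have p3: "\<epsilon> \<le> (1 - \<beta>) / \<beta> * (f xk - f z - m / 2 * d2)"
  proof -
    define A where "A = f xk - f z - m / 2 * d2"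
    have "\<beta> * (f xk - ft z) \<le> A" using descent A_def d2_def by simp
    have e: "\<epsilon> = (f xk - ft z) - A" using eps_def A_def d2_def by simp
    have be: "\<beta> * \<epsilon> = \<beta> * (f xk - ft z) - \<beta> * A" using e by (simp add: right_diff_distrib)
    have "(1 - \<beta>) * A = A - \<beta> * A" by (simp add: left_diff_distrib)
    then have "\<beta> * \<epsilon> \<le> (1 - \<beta>) * A" using be \<open>\<beta> * (f xk - ft z) \<le> A\<close> by linarith
    then have "\<epsilon> \<le> (1 - \<beta>) * A / \<beta>" using beta by (simp add: pos_le_divide_eq mult.commute)
    then show ?thesis using A_def by simp
  qed
  show ?thesis unfolding eq2 eq3 using part1 p2' p3 by blast
qed

end
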